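(* Let $d = 2$ and $\hat X \in U(2)$. Let $F = \int d\psi\, |\langle\psi|\hat X|\psi\rangle|^2$ and $D = \sqrt{\int d\psi\, |\langle\psi|\hat X|\psi\rangle|^4 - F^2}$. Then $$D = \frac{1-F}{\sqrt 5}.$$
   Context: $d\psi$ denotes the unitarily invariant (Haar-induced) probability measure on unit vectors of $\mathbb{C}^2$. *)

theory Defs
  imports "HOL-Analysis.Analysis"
begin

text \<open>Vectors of C^2 are complex^2 (a 4-dimensional real Euclidean space);
  2x2 complex matrices are complex^2^2.\<close>

definition adjoint2 :: "complex^2^2 \<Rightarrow> complex^2^2" where
  "adjoint2 A = (\<chi> i j. cnj (A $ j $ i))"

definition unitary2 :: "complex^2^2 \<Rightarrow> bool" where
  "unitary2 A \<longleftrightarrow> adjoint2 A ** A = mat 1 \<and> A ** adjoint2 A = mat 1"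

definition expval :: "complex^2^2 \<Rightarrow> complex^2 \<Rightarrow> complex" where
  "expval A \<psi> = (\<Sum>i\<in>UNIV. cnj (\<psi> $ i) * (A *v \<psi>) $ i)"

text \<open>The unitarily invariant probability measure on unit vectors of C^2:
  the uniform (normalised surface) measure on the unit sphere, realised as the
  push-forward of the normalised Lebesgue measure on the unit ball of C^2 = R^4
  under radial projection x \<mapsto> x/|x|.\<close>
definition haar_state :: "(complex^2) measure" where
  "haar_state = distr (uniform_measure lborel (ball 0 1)) borel (\<lambda>x. sgn x)"

end

theory Submission
  imports Defs
begin

lemma lin_meas: "linear (f::'a::euclidean_space \<Rightarrow> 'b::euclidean_space) \<Longrightarrow> f \<in> borel_measurable borel"
  by (intro borel_measurable_continuous_onI linear_continuous_on linear_conv_bounded_linear[THEN iffD1])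

lemma lborel_basis_perm:
  fixes f :: "'a::euclidean_space \<Rightarrow> 'b::euclidean_space"
  assumes lin: "linear f" and ip: "\<And>x y. f x \<bullet> f y = x \<bullet> y" and B: "f ` Basis = Basis"
  shows "distr lborel borel f = lborel"
proof (rule lborel_eqI[symmetric])
  have fm: "f \<in> borel_measurable borel" using lin lin_meas by blast
  have inj: "inj_on f Basis"
    by (metis inj_onI ip inner_commute vector_eq)
  fix l u :: 'b assume le: "\<And>b. b\<in>Basis \<Longrightarrow> l\<bullet>b \<le> u\<bullet>b"
  define l' where "l' = (\<Sum>b\<in>(Basis::'a set). (l \<bullet> f b) *\<^sub>R b)"
  define u' where "u' = (\<Sum>b\<in>(Basis::'a set). (u \<bullet> f b) *\<^sub>R b)"
  have l'b: "l' \<bullet> b = l \<bullet> f b" if "b \<in> Basis" for b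
    unfolding l'_def using that by (simp add: inner_sum_left inner_Basis if_distrib cong: if_cong)
  have u'b: "u' \<bullet> b = u \<bullet> f b" if "b \<in> Basis" for b
    unfolding u'_def using that by (simp add: inner_sum_left inner_Basis if_distrib cong: if_cong)
  have "f -` box l u = box l' u'"
  proof -
    have "x \<in> f -` box l u \<longleftrightarrow> x \<in> box l' u'" for x
    proof -
      have "x \<in> f -` box l u \<longleftrightarrow> (\<forall>c\<in>Basis. l \<bullet> c < f x \<bullet> c \<and> f x \<bullet> c < u \<bullet> c)"
        by (simp add: mem_box)
      also have "\<dots> \<longleftrightarrow> (\<forall>b\<in>Basis. l \<bullet> f b < f x \<bullet> f b \<and> f x \<bullet> f b < u \<bullet> f b)"
        using B by (metis (no_types, lifting) image_iff)
      also have "\<dots> \<longleftrightarrow> x \<in> box l' u'"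
        by (simp add: mem_box ip l'b u'b)
      finally show ?thesis .
    qed
    then show ?thesis by blast
  qed
  then have "emeasure (distr lborel borel f) (box l u) = emeasure lborel (box l' u')"
    using fm by (simp add: emeasure_distr)
  also have "\<dots> = (\<Prod>b\<in>Basis. (u' - l') \<bullet> b)"
    using le by (subst emeasure_lborel_box) (auto simp: l'b u'b image_subset_iff B[symmetric])
  also have "\<dots> = (\<Prod>b\<in>Basis. (u - l) \<bullet> f b)"
    by (intro arg_cong[where f=ennreal] prod.cong) (auto simp: inner_diff_left l'b u'b)
  also have "\<dots> = (\<Prod>c\<in>Basis. (u - l) \<bullet> c)"
    using prod.reindex[OF inj, of "\<lambda>c. (u - l) \<bullet> c"] B by simp
  finally show "emeasure (distr lborel borel f) (box l u) = (\<Prod>c\<in>Basis. (u - l) \<bullet> c)" .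
qed simp

lemma lborel_orth_cart:
  fixes g :: "real^4 \<Rightarrow> real^4"
  assumes g: "orthogonal_transformation g"
  shows "distr lborel borel g = lborel"
proof (rule lborel_eqI[symmetric])
  have gm: "g \<in> borel_measurable borel"
    using g lin_meas orthogonal_transformation_linear by blast
  fix l u :: "real^4" assume le: "\<And>b. b\<in>Basis \<Longrightarrow> l\<bullet>b \<le> u\<bullet>b"
  have eq: "g -` box l u = inv g ` box l u"
    using orthogonal_transformation_bij[OF g] by (simp add: bij_vimage_eq_inv_image)
  have bm: "g -` box l u \<in> sets lborel" using gm by (simp add: measurable_sets_borel)
  have "emeasure (distr lborel borel g) (box l u) = emeasure lborel (g -` box l u)"
    using gm by (simp add: emeasure_distr)
  also have "\<dots> = emeasure lebesgue (g -` box l u)"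
    using bm by (simp add: emeasure_completion)
  also have "\<dots> = ennreal (measure lebesgue (inv g ` box l u))"
    unfolding eq using measurable_orthogonal_image[OF orthogonal_transformation_inv[OF g], of "box l u"]
    by (simp add: emeasure_eq_measure2)
  also have "\<dots> = ennreal (measure lebesgue (box l u))"
    using measure_orthogonal_image[OF orthogonal_transformation_inv[OF g], of "box l u"] by simp
  also have "\<dots> = emeasure lborel (box l u)"
    by (simp add: emeasure_eq_measure2 emeasure_completion)
  finally show "emeasure (distr lborel borel g) (box l u) = (\<Prod>b\<in>Basis. (u - l) \<bullet> b)"
    using le by simp
qed simp

definition T4 :: "real^4 \<Rightarrow> complex^2" where
  "T4 x = (\<chi> i. if i = 1 then Complex (x$1) (x$2) else Complex (x$3) (x$4))"
definition T4i :: "complex^2 \<Rightarrow> real^4" where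
  "T4i z = (\<chi> i. if i = 1 then Re (z$1) else if i = 2 then Im (z$1) else if i = 3 then Re (z$2) else Im (z$2))"
lemma T4_1: "T4 x $ 1 = Complex (x$1) (x$2)" by (simp add: T4_def)
lemma T4_2: "T4 x $ 2 = Complex (x$3) (x$4)" by (simp add: T4_def)
lemma T4i_c: "T4i z $ 1 = Re (z$1)" "T4i z $ 2 = Im (z$1)" "T4i z $ 3 = Re (z$2)" "T4i z $ 4 = Im (z$2)"
  by (simp_all add: T4i_def)
lemma T4_T4i: "T4 (T4i z) = z"
  by (simp add: vec_eq_iff forall_2 T4_1 T4_2 T4i_c complex_eq_iff)
lemma T4i_T4: "T4i (T4 x) = x"
  by (simp add: vec_eq_iff forall_4 T4_1 T4_2 T4i_c)
lemma T4_ip: "T4 x \<bullet> T4 y = x \<bullet> y"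
  by (simp add: inner_vec_def sum_2 sum_4 inner_complex_def T4_1 T4_2)
lemma T4_lin: "linear T4"
  by (rule linearI) (simp_all add: vec_eq_iff forall_2 T4_1 T4_2 complex_eq_iff)
lemma T4i_lin: "linear T4i"
  by (rule linearI) (simp_all add: vec_eq_iff forall_4 T4i_c)
lemma T4i_ip: "T4i x \<bullet> T4i y = x \<bullet> y"
  by (metis T4_ip T4_T4i)

lemma Basis_c2: "(Basis :: (complex^2) set) = {axis 1 1, axis 1 \<i>, axis 2 1, axis 2 \<i>}"
  by (simp add: Basis_vec_def Basis_complex_def UNIV_2; blast)
lemma Basis_r4: "(Basis :: (real^4) set) = {axis 1 1, axis 2 1, axis 3 1, axis 4 1}"
  by (simp add: Basis_vec_def UNIV_4; blast)

lemma T4_Basis: "T4 ` Basis = Basis"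
proof -
  have "T4 (axis 1 1) = axis 1 1" "T4 (axis 2 1) = axis 1 \<i>" "T4 (axis 3 1) = axis 2 1" "T4 (axis 4 1) = axis 2 \<i>"
    by (simp_all add: T4_def axis_def vec_eq_iff forall_2 complex_eq_iff)
  then show ?thesis unfolding Basis_c2 Basis_r4 image_insert image_empty by (simp only:)
qed

lemma lborel_c2: "distr lborel borel T4 = (lborel :: (complex^2) measure)"
  by (rule lborel_basis_perm[OF T4_lin T4_ip T4_Basis])

lemma lborel_orth_c2:
  fixes h :: "complex^2 \<Rightarrow> complex^2"
  assumes h: "orthogonal_transformation h"
  shows "distr lborel borel h = lborel"
proof -
  define g where "g = T4i \<circ> h \<circ> T4"
  have hl: "linear h" using h orthogonal_transformation_linear by blast
  have g: "orthogonal_transformation g"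
    unfolding orthogonal_transformation_def g_def
    using h hl by (auto simp: T4i_ip T4_ip orthogonal_transformation_def intro!: linear_compose T4_lin T4i_lin)
  have gl: "linear g" using g orthogonal_transformation_linear by blast
  have hT: "h \<circ> T4 = T4 \<circ> g" by (simp add: g_def fun_eq_iff T4_T4i)
  have "distr lborel borel h = distr (distr lborel borel T4) borel h"
    by (simp add: lborel_c2)
  also have "\<dots> = distr lborel borel (h \<circ> T4)"
    by (rule distr_distr) (simp_all add: lin_meas hl T4_lin)
  also have "\<dots> = distr lborel borel (T4 \<circ> g)" by (simp add: hT)
  also have "\<dots> = distr (distr lborel borel g) borel T4"
    by (rule distr_distr[symmetric]) (simp_all add: lin_meas gl T4_lin)
  also have "\<dots> = lborel" by (simp add: lborel_orth_cart[OF g] lborel_c2)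
  finally show ?thesis .
qed


abbreviation "UB \<equiv> uniform_measure lborel (ball (0::complex^2) 1)"

lemma ball_fin: "emeasure lborel (ball (0::complex^2) 1) \<noteq> top"
  using emeasure_lborel_ball_finite[of "0::complex^2" 1] by simp
lemma ball_pos: "emeasure lborel (ball (0::complex^2) 1) \<noteq> 0"
proof -
  have "0 < measure lborel (ball (0::complex^2) 1)" using content_ball_pos[of 1 "0::complex^2"] by simp
  then show ?thesis using emeasure_eq_ennreal_measure[OF ball_fin] by simp
qed

lemma sets_UB[simp]: "sets UB = sets borel" by simp
lemma space_UB[simp]: "space UB = UNIV" by simp
lemma sets_haar[simp]: "sets haar_state = sets borel" by (simp add: haar_state_def)
lemma space_haar[simp]: "space haar_state = UNIV" by (simp add: haar_state_def)

lemma meas_haar_iff[simp]: "f \<in> measurable haar_state N \<longleftrightarrow> f \<in> measurable borel N"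
  using measurable_cong_sets[of haar_state borel N N] by simp
lemma meas_UB_iff[simp]: "f \<in> measurable UB N \<longleftrightarrow> f \<in> measurable borel N"
  using measurable_cong_sets[of UB borel N N] by simp

lemma unif_inv:
  fixes h :: "complex^2 \<Rightarrow> complex^2"
  assumes h: "orthogonal_transformation h"
  shows "distr UB borel h = UB"
proof (rule measure_eqI)
  show "sets (distr UB borel h) = sets UB" by simp
  have hm: "h \<in> borel_measurable borel"
    using h lin_meas orthogonal_transformation_linear by blast
  have pre: "h -` ball 0 1 = ball 0 1"
    using h by (auto simp: orthogonal_transformation_norm)
  fix A assume "A \<in> sets (distr UB borel h)"
  then have A: "A \<in> sets borel" by simp
  have hA: "h -` A \<in> sets borel" using hm A by (simp add: measurable_sets_borel)
  have "emeasure (distr UB borel h) A = emeasure UB (h -` A)"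
    using hm A by (simp add: emeasure_distr)
  also have "\<dots> = emeasure lborel (ball 0 1 \<inter> h -` A) / emeasure lborel (ball (0::complex^2) 1)"
    using hA by simp
  also have "ball 0 1 \<inter> h -` A = h -` (ball 0 1 \<inter> A)" using pre by auto
  also have "emeasure lborel (h -` (ball 0 1 \<inter> A)) = emeasure (distr lborel borel h) (ball 0 1 \<inter> A)"
    using hm A by (simp add: emeasure_distr)
  also have "\<dots> = emeasure lborel (ball 0 1 \<inter> A)" by (simp add: lborel_orth_c2[OF h])
  also have "emeasure lborel (ball 0 1 \<inter> A) / emeasure lborel (ball (0::complex^2) 1) = emeasure UB A"
    using A by simp
  finally show "emeasure (distr UB borel h) A = emeasure UB A" .
qed

lemma haar_inv:
  fixes h :: "complex^2 \<Rightarrow> complex^2"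
  assumes h: "orthogonal_transformation h"
  shows "distr haar_state borel h = haar_state"
proof -
  have hm: "h \<in> borel_measurable borel"
    using h lin_meas orthogonal_transformation_linear by blast
  have comm: "h \<circ> sgn = sgn \<circ> h"
    using h by (simp add: fun_eq_iff sgn_div_norm orthogonal_transformation_scaleR orthogonal_transformation_norm)
  have "distr haar_state borel h = distr (distr UB borel sgn) borel h" by (simp add: haar_state_def)
  also have "\<dots> = distr UB borel (h \<circ> sgn)"
    by (rule distr_distr) (simp_all add: hm)
  also have "\<dots> = distr UB borel (sgn \<circ> h)" by (simp add: comm)
  also have "\<dots> = distr (distr UB borel h) borel sgn"
    by (rule distr_distr[symmetric]) (simp_all add: hm)
  also have "\<dots> = haar_state" by (simp add: unif_inv[OF h] haar_state_def)
  finally show ?thesis .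
qed

lemma integral_inv:
  fixes h :: "complex^2 \<Rightarrow> complex^2" and f :: "complex^2 \<Rightarrow> real"
  assumes h: "orthogonal_transformation h" and f: "f \<in> borel_measurable borel"
  shows "(\<integral>\<psi>. f (h \<psi>) \<partial>haar_state) = (\<integral>\<psi>. f \<psi> \<partial>haar_state)"
proof -
  have hm: "h \<in> borel_measurable borel"
    using h lin_meas orthogonal_transformation_linear by blast
  have "(\<integral>\<psi>. f (h \<psi>) \<partial>haar_state) = integral\<^sup>L (distr haar_state borel h) f"
    by (rule integral_distr[symmetric]) (simp_all add: hm f)
  then show ?thesis by (simp add: haar_inv[OF h])
qed

lemma haar_AE_norm: "AE \<psi> in haar_state. norm \<psi> = 1"
proof -
  have nz: "AE x in lborel. x \<noteq> (0::complex^2)" by (rule AE_lborel_singleton)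
  have "AE x in lborel. (x::complex^2) \<in> ball 0 1 \<longrightarrow> norm (sgn x) = 1"
    by (rule eventually_mono[OF nz]) (simp add: norm_sgn)
  then have *: "AE x in UB. norm (sgn x) = 1"
    by (intro AE_uniform_measureI) simp_all
  have m1: "sgn \<in> measurable UB (borel :: (complex^2) measure)"
    by (simp only: meas_UB_iff) (rule borel_measurable_sgn)
  have m2: "{x \<in> space (borel :: (complex^2) measure). norm x = 1} \<in> sets borel"
    by measurable
  show ?thesis unfolding haar_state_def
    using * by (subst AE_distr_iff[OF m1 m2])
qed

lemma haar_finite: "finite_measure haar_state"
proof
  have "emeasure haar_state (space haar_state) = emeasure UB UNIV"
    by (simp add: haar_state_def emeasure_distr)
  also have "\<dots> = emeasure lborel (ball (0::complex^2) 1) / emeasure lborel (ball (0::complex^2) 1)"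
    by simp
  also have "\<dots> = 1"
    by (rule ennreal_divide_self) (use ball_pos ball_fin in \<open>auto simp: less_top\<close>)
  finally show "emeasure haar_state (space haar_state) \<noteq> \<infinity>" by simp
qed

lemma integrable_cont:
  fixes f :: "complex^2 \<Rightarrow> real"
  assumes f: "continuous_on UNIV f"
  shows "integrable haar_state f"
proof -
  have "compact (f ` cball 0 1)"
    by (rule compact_continuous_image) (auto intro: continuous_on_subset[OF f])
  then obtain B where B: "\<And>x. x \<in> cball 0 1 \<Longrightarrow> norm (f x) \<le> B"
    using compact_imp_bounded bounded_iff by (metis image_eqI)
  have "AE \<psi> in haar_state. norm (f \<psi>) \<le> B"
    using haar_AE_norm by eventually_elim (metis B mem_cball_0 order_refl)
  moreover have "f \<in> borel_measurable haar_state"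
    using f by (simp add: borel_measurable_continuous_onI)
  ultimately show ?thesis
    using finite_measure.integrable_const_bound[OF haar_finite] by blast
qed

definition vec2 :: "complex \<Rightarrow> complex \<Rightarrow> complex^2" where
  "vec2 a b = (\<chi> i. if i = 1 then a else b)"
lemma vec2_nth[simp]: "vec2 a b $ 1 = a" "vec2 a b $ 2 = b"
  by (simp_all add: vec2_def)

definition Up :: "complex \<Rightarrow> complex \<Rightarrow> complex^2 \<Rightarrow> complex^2" where
  "Up p1 p2 \<psi> = vec2 (\<psi>$1 * p1 - \<psi>$2 * cnj p2) (\<psi>$1 * p2 + \<psi>$2 * cnj p1)"

lemma norm_c2: "norm (\<psi>::complex^2) = sqrt (cmod (\<psi>$1)^2 + cmod (\<psi>$2)^2)"
  by (simp add: norm_vec_def L2_set_def sum_2)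

lemma Up_norm_sq:
  assumes "cmod p1 ^ 2 + cmod p2 ^ 2 = 1"
  shows "cmod (x1 * p1 - x2 * cnj p2)^2 + cmod (x1 * p2 + x2 * cnj p1)^2 = cmod x1 ^2 + cmod x2 ^ 2"
proof -
  have "cmod (x1 * p1 - x2 * cnj p2)^2 + cmod (x1 * p2 + x2 * cnj p1)^2
     = (cmod x1 ^2 + cmod x2 ^ 2) * (cmod p1 ^ 2 + cmod p2 ^ 2)"
    by (simp only: cmod_power2) (simp add: power2_eq_square algebra_simps)
  then show ?thesis using assms by simp
qed

lemma Up_orth:
  assumes "cmod p1 ^ 2 + cmod p2 ^ 2 = 1"
  shows "orthogonal_transformation (Up p1 p2)"
  unfolding orthogonal_transformation
proof
  show "linear (Up p1 p2)"
    by (rule linearI) (simp_all add: Up_def vec_eq_iff forall_2 algebra_simps vector_scaleR_component scaleR_conv_of_real[where 'a=complex])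
  show "\<forall>v. norm (Up p1 p2 v) = norm v"
    using Up_norm_sq[OF assms] by (simp add: norm_c2 Up_def)
qed


definition rr :: complex where "rr = complex_of_real (1 / sqrt 2)"
lemma rr_cnj[simp]: "cnj rr = rr" by (simp add: rr_def)
lemma rr_sq: "rr * rr = 1/2"
proof -
  have "(1 / sqrt 2) * (1 / sqrt 2) = (1/2::real)" by (simp add: field_simps)
  then have "complex_of_real ((1 / sqrt 2) * (1 / sqrt 2)) = 1/2" by simp
  then show ?thesis by (simp only: rr_def of_real_mult)
qed
lemma rr_cmod: "cmod rr ^ 2 = 1/2"
  unfolding rr_def norm_of_real by (simp add: power_divide)

lemma H_prod:
  fixes w :: complex
  assumes "cmod w = 1"
  shows "cmod (x1 * rr - x2 * cnj (w * rr))^2 * cmod (x1 * (w*rr) + x2 * cnj rr)^2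
       = cmod (w * x1^2 - cnj w * x2^2)^2 / 4"
proof -
  have ww: "w * cnj w = 1" using complex_norm_square[of w] assms by simp
  have "(x1 * rr - x2 * cnj (w * rr)) * (x1 * (w*rr) + x2 * cnj rr)
      = (rr*rr) * (w * x1^2 - cnj w * x2^2 + x1*x2*(1 - w * cnj w))"
    by (simp add: algebra_simps power2_eq_square)
  also have "\<dots> = (w * x1^2 - cnj w * x2^2) / 2" unfolding rr_sq ww by simp
  finally have p: "(x1 * rr - x2 * cnj (w * rr)) * (x1 * (w*rr) + x2 * cnj rr) = (w * x1^2 - cnj w * x2^2) / 2" .
  have "cmod (x1 * rr - x2 * cnj (w * rr))^2 * cmod (x1 * (w*rr) + x2 * cnj rr)^2
      = cmod ((x1 * rr - x2 * cnj (w * rr)) * (x1 * (w*rr) + x2 * cnj rr))^2"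
    by (simp add: norm_mult power_mult_distrib)
  also have "\<dots> = cmod (w * x1^2 - cnj w * x2^2)^2 / 4"
    unfolding p by (simp add: norm_divide power_divide)
  finally show ?thesis .
qed

lemma Up_rr_norm: "cmod w = 1 \<Longrightarrow> cmod rr ^ 2 + cmod (w * rr) ^ 2 = 1"
  by (simp add: norm_mult power_mult_distrib rr_cmod)

lemma para: "cmod (a - b)^2 + cmod (a + b)^2 = 2 * (cmod a^2 + cmod b^2)"
  by (simp only: cmod_power2) (simp add: power2_eq_square algebra_simps)

lemma four: "(cmod (a - b)^2)^2 + (cmod (a + b)^2)^2 + (cmod (a + \<i>*b)^2)^2 + (cmod (a - \<i>*b)^2)^2
   = 4*(cmod a^2 + cmod b^2)^2 + 8 * cmod a^2 * cmod b^2"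
  by (simp only: cmod_power2) (simp add: power2_eq_square algebra_simps)

definition ee :: complex where "ee = Complex (1 / sqrt 2) (1 / sqrt 2)"
lemma ee_cmod: "cmod ee = 1"
  by (simp add: ee_def cmod_def power_divide)
lemma ee_cnj: "cnj ee = - (ee * \<i>)"
  by (simp add: ee_def complex_eq_iff)
lemma ee1: "ee * a - cnj ee * b = ee * (a + \<i> * b)"
  by (simp add: ee_cnj algebra_simps)
lemma ee2: "cnj ee * a - cnj (cnj ee) * b = cnj ee * (a - \<i> * b)"
  by (simp add: ee_cnj algebra_simps)

definition kk :: "complex \<Rightarrow> complex \<Rightarrow> complex \<Rightarrow> real" where
  "kk w x1 x2 = cmod (w * x1^2 - cnj w * x2^2)^2"

lemma K1: "kk 1 x1 x2 + kk \<i> x1 x2 = 2 * ((cmod x1^2)^2 + (cmod x2^2)^2)"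
proof -
  have "\<i> * x1^2 - cnj \<i> * x2^2 = \<i> * (x1^2 + x2^2)" by (simp add: algebra_simps)
  then have "kk \<i> x1 x2 = cmod (x1^2 + x2^2)^2"
    by (simp add: kk_def norm_mult)
  moreover have "kk 1 x1 x2 = cmod (x1^2 - x2^2)^2" by (simp add: kk_def)
  ultimately show ?thesis using para[of "x1^2" "x2^2"] by (simp add: norm_power)
qed


lemma K2: "(kk 1 x1 x2)^2 + (kk \<i> x1 x2)^2 + (kk ee x1 x2)^2 + (kk (cnj ee) x1 x2)^2
   = 4*((cmod x1^2)^2 + (cmod x2^2)^2)^2 + 8*(cmod x1^2)^2*(cmod x2^2)^2"
proof -
  have "\<i> * x1^2 - cnj \<i> * x2^2 = \<i> * (x1^2 + x2^2)" by (simp add: algebra_simps)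
  then have a: "kk \<i> x1 x2 = cmod (x1^2 + x2^2)^2"
    by (simp add: kk_def norm_mult)
  have b: "kk 1 x1 x2 = cmod (x1^2 - x2^2)^2" by (simp add: kk_def)
  have c: "kk ee x1 x2 = cmod (x1^2 + \<i> * x2^2)^2"
    unfolding kk_def ee1 by (simp add: norm_mult ee_cmod)
  have d: "kk (cnj ee) x1 x2 = cmod (x1^2 - \<i> * x2^2)^2"
    unfolding kk_def ee2 by (simp add: norm_mult ee_cmod)
  show ?thesis unfolding a b c d using four[of "x1^2" "x2^2"] by (simp add: norm_power)
qed

lemma ipM:
  fixes a b c d :: complex
  assumes U1: "cnj a * a + cnj c * c = 1" and U2: "cnj a * b + cnj c * d = 0"
    and U3: "cnj b * a + cnj d * c = 0" and U4: "cnj b * b + cnj d * d = 1"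
  shows "cnj (a*x1 + b*x2) * (a*y1 + b*y2) + cnj (c*x1 + d*x2) * (c*y1 + d*y2) = cnj x1 * y1 + cnj x2 * y2"
proof -
  have "cnj (a*x1 + b*x2) * (a*y1 + b*y2) + cnj (c*x1 + d*x2) * (c*y1 + d*y2)
     = cnj x1*y1*(cnj a * a + cnj c * c) + cnj x1*y2*(cnj a * b + cnj c * d)
       + cnj x2*y1*(cnj b * a + cnj d * c) + cnj x2*y2*(cnj b * b + cnj d * d)"
    by (simp add: algebra_simps)
  then show ?thesis using assms by simp
qed

lemma t1: fixes a b c d r :: complex
  assumes r2: "r^2 = (a+d)^2 - 4*(a*d - b*c)"
  shows "c*b + d*((a + d + r) / 2 - a) = (a + d + r) / 2*((a + d + r) / 2 - a)"
proof -
  have st: "4 * ((a + d + r) / 2*((a + d + r) / 2 - a)) - 4 * (c*b + d*((a + d + r) / 2 - a)) = r^2 - ((a+d)^2 - 4*(a*d - b*c))"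
    by (simp add: field_simps power2_eq_square)
  have "4 * ((a + d + r) / 2*((a + d + r) / 2 - a)) - 4 * (c*b + d*((a + d + r) / 2 - a)) = 0"
    unfolding st r2 by simp
  then show ?thesis by (simp only: right_minus_eq mult_cancel_left) simp
qed

lemma eigen_ex:
  fixes a b c d :: complex
  shows "\<exists>l e1 e2. (e1 \<noteq> 0 \<or> e2 \<noteq> 0) \<and> a*e1 + b*e2 = l*e1 \<and> c*e1 + d*e2 = l*e2"
proof (cases "b = 0")
  case True
  then show ?thesis by (intro exI[of _ d] exI[of _ 0] exI[of _ 1]) simp
next
  case False
  define r where "r = csqrt ((a+d)^2 - 4*(a*d - b*c))"
  have r2: "r^2 = (a+d)^2 - 4*(a*d - b*c)" by (simp add: r_def)
  define l where "l = (a + d + r) / 2"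
  have "c*b + d*(l - a) = l*(l - a)"
    using t1[OF r2] unfolding l_def .
  then show ?thesis using False
    by (intro exI[of _ l] exI[of _ b] exI[of _ "l - a"]) (simp add: algebra_simps)
qed


lemma cmod_one: "cnj l * l = 1 \<Longrightarrow> cmod l = 1"
proof -
  assume h: "cnj l * l = 1"
  have "complex_of_real (cmod l ^ 2) = 1" using complex_norm_square[of l] h by (simp add: mult.commute)
  then have "cmod l ^ 2 = 1" using of_real_eq_1_iff by blast
  then show ?thesis using norm_ge_zero[of l] by (auto simp: power2_eq_1_iff)
qed

lemma diag_core:
  fixes a b c d :: complex
  assumes U1: "cnj a * a + cnj c * c = 1" and U2: "cnj a * b + cnj c * d = 0"
    and U3: "cnj b * a + cnj d * c = 0" and U4: "cnj b * b + cnj d * d = 1"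
  shows "\<exists>p1 p2 l1 l2. cmod p1^2 + cmod p2^2 = 1 \<and> cmod l1 = 1 \<and> cmod l2 = 1 \<and>
     (\<forall>x1 x2. cnj (x1*p1 - x2*cnj p2) * (a*(x1*p1 - x2*cnj p2) + b*(x1*p2 + x2*cnj p1))
       + cnj (x1*p2 + x2*cnj p1) * (c*(x1*p1 - x2*cnj p2) + d*(x1*p2 + x2*cnj p1))
       = l1 * (cnj x1 * x1) + l2 * (cnj x2 * x2))"
proof -
  note ip = ipM[OF U1 U2 U3 U4]
  obtain l e1 e2 where ne: "e1 \<noteq> 0 \<or> e2 \<noteq> 0" and E1: "a*e1 + b*e2 = l*e1" and E2: "c*e1+d*e2 = l*e2"
    using eigen_ex by blast
  define n where "n = sqrt (cmod e1^2 + cmod e2^2)"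
  have pos: "cmod e1^2 + cmod e2^2 > 0" using ne
    by (auto intro: add_pos_nonneg add_nonneg_pos)
  then have npos: "n > 0" by (simp add: n_def)
  have n2: "n^2 = cmod e1^2 + cmod e2^2" using pos by (simp add: n_def)
  have nz: "complex_of_real n \<noteq> 0" using npos by simp
  define p1 where "p1 = e1 / of_real n"
  define p2 where "p2 = e2 / of_real n"
  have PR: "cmod p1^2 + cmod p2^2 = 1"
    using npos n2 ne by (simp add: p1_def p2_def norm_divide power_divide add_divide_distrib[symmetric])
  have P: "cnj p1 * p1 + cnj p2 * p2 = 1"
  proof -
    have "cnj p1 * p1 + cnj p2 * p2 = complex_of_real (cmod p1^2 + cmod p2^2)"
      by (simp only: of_real_add complex_norm_square) (simp add: ac_simps)
    then show ?thesis using PR by simp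
  qed
  have E1': "a*p1 + b*p2 = l*p1"
  proof -
    have "a*p1 + b*p2 = (a*e1 + b*e2) / of_real n" by (simp add: p1_def p2_def add_divide_distrib)
    then show ?thesis by (simp add: E1 p1_def)
  qed
  have E2': "c*p1 + d*p2 = l*p2"
  proof -
    have "c*p1 + d*p2 = (c*e1 + d*e2) / of_real n" by (simp add: p1_def p2_def add_divide_distrib)
    then show ?thesis by (simp add: E2 p2_def)
  qed
  have ll: "cnj l * l = 1"
  proof -
    have "cnj (l*p1) * (l*p1) + cnj (l*p2)*(l*p2) = 1" using ip[of p1 p2 p1 p2] E1' E2' P by simp
    moreover have "cnj (l*p1) * (l*p1) + cnj (l*p2)*(l*p2) = cnj l * l * (cnj p1*p1 + cnj p2*p2)"
      by (simp add: algebra_simps)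
    ultimately show ?thesis using P by simp
  qed
  define q1 where "q1 = - cnj p2"
  define q2 where "q2 = cnj p1"
  define Mq1 where "Mq1 = a*q1 + b*q2"
  define Mq2 where "Mq2 = c*q1 + d*q2"
  have Z: "cnj p1 * Mq1 + cnj p2 * Mq2 = 0"
  proof -
    have "cnj (l*p1) * Mq1 + cnj (l*p2) * Mq2 = cnj p1 * q1 + cnj p2 * q2"
      using ip[of p1 p2 q1 q2] E1' E2' by (simp add: Mq1_def Mq2_def)
    also have "\<dots> = 0" by (simp add: q1_def q2_def)
    finally have "cnj l * (cnj p1 * Mq1 + cnj p2 * Mq2) = 0" by (simp add: algebra_simps)
    moreover have "cnj l \<noteq> 0" using ll by auto
    ultimately show ?thesis by simp
  qed
  define l2 where "l2 = cnj q1 * Mq1 + cnj q2 * Mq2"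
  have Mq1e: "Mq1 = l2 * q1"
  proof -
    have "l2*q1 = Mq1 * (cnj p1 * p1 + cnj p2 * p2) - p1 * (cnj p1 * Mq1 + cnj p2 * Mq2)"
      by (simp add: l2_def q1_def q2_def algebra_simps)
    then show ?thesis using P Z by simp
  qed
  have Mq2e: "Mq2 = l2 * q2"
  proof -
    have "l2*q2 = Mq2 * (cnj p1 * p1 + cnj p2 * p2) - p2 * (cnj p1 * Mq1 + cnj p2 * Mq2)"
      by (simp add: l2_def q1_def q2_def algebra_simps)
    then show ?thesis using P Z by simp
  qed
  have QQ: "cnj q1 * q1 + cnj q2 * q2 = 1" using P by (simp add: q1_def q2_def mult.commute add.commute)
  have l2l2: "cnj l2 * l2 = 1"
  proof -
    have "cnj Mq1 * Mq1 + cnj Mq2 * Mq2 = 1" using ip[of q1 q2 q1 q2] QQ by (simp add: Mq1_def Mq2_def)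
    moreover have "cnj Mq1 * Mq1 + cnj Mq2 * Mq2 = cnj l2 * l2 * (cnj q1 * q1 + cnj q2 * q2)"
      unfolding Mq1e Mq2e by (simp add: algebra_simps)
    ultimately show ?thesis using QQ by simp
  qed
  have main: "cnj (x1*p1 - x2*cnj p2) * (a*(x1*p1 - x2*cnj p2) + b*(x1*p2 + x2*cnj p1))
       + cnj (x1*p2 + x2*cnj p1) * (c*(x1*p1 - x2*cnj p2) + d*(x1*p2 + x2*cnj p1))
       = l * (cnj x1 * x1) + l2 * (cnj x2 * x2)" for x1 x2
  proof -
    have r1: "a*(x1*p1 - x2*cnj p2) + b*(x1*p2 + x2*cnj p1) = x1*(a*p1+b*p2) + x2*Mq1"
      by (simp add: Mq1_def q1_def q2_def algebra_simps)
    have r2: "c*(x1*p1 - x2*cnj p2) + d*(x1*p2 + x2*cnj p1) = x1*(c*p1+d*p2) + x2*Mq2"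
      by (simp add: Mq2_def q1_def q2_def algebra_simps)
    have "cnj (x1*p1 - x2*cnj p2) * (x1*(l*p1) + x2*(l2*q1)) + cnj (x1*p2 + x2*cnj p1) * (x1*(l*p2) + x2*(l2*q2))
        = l * (cnj x1 * x1) * (cnj p1 * p1 + cnj p2 * p2) + l2 * (cnj x2 * x2) * (cnj p1 * p1 + cnj p2 * p2)"
      by (simp add: q1_def q2_def algebra_simps)
    then show ?thesis unfolding r1 r2 E1' E2' Mq1e[symmetric] Mq2e[symmetric] using P
      by (simp add: Mq1e Mq2e)
  qed
  show ?thesis
    by (intro exI[of _ p1] exI[of _ p2] exI[of _ l] exI[of _ l2] conjI allI PR cmod_one ll l2l2 main)
qed


lemma haar_measure1: "measure haar_state (space haar_state) = 1"
proof -
  have "emeasure haar_state (space haar_state) = emeasure UB UNIV"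
    by (simp add: haar_state_def emeasure_distr)
  also have "\<dots> = emeasure lborel (ball (0::complex^2) 1) / emeasure lborel (ball (0::complex^2) 1)"
    by simp
  also have "\<dots> = 1"
    by (rule ennreal_divide_self) (use ball_pos ball_fin in \<open>auto simp: less_top\<close>)
  finally show ?thesis by (simp add: measure_def)
qed

lemma haar_measure1'[simp]: "measure haar_state UNIV = 1"
  using haar_measure1 by simp

lemma int_const[simp]: "integrable haar_state (\<lambda>_. c::real)"
  by (rule integrable_cont) simp

lemma Lconst[simp]: "(\<integral>\<psi>. c \<partial>haar_state) = (c::real)"
  using haar_measure1 by simp

lemma cont_meas: "continuous_on UNIV (f :: complex^2 \<Rightarrow> real) \<Longrightarrow> f \<in> borel_measurable haar_state"
  by (simp add: borel_measurable_continuous_onI)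

lemma AE_sum: "AE \<psi> in haar_state. cmod (\<psi>$1)^2 + cmod (\<psi>$2)^2 = 1"
  using haar_AE_norm by eventually_elim (simp add: norm_c2)

lemma kk_cont: "continuous_on UNIV (\<lambda>\<psi>::complex^2. kk w (\<psi>$1) (\<psi>$2))"
  unfolding kk_def by (intro continuous_intros)

lemma u_cont: "continuous_on UNIV (\<lambda>\<psi>::complex^2. cmod (\<psi>$1)^2 * cmod (\<psi>$2)^2)"
  by (intro continuous_intros)

lemma HH_u:
  assumes "cmod w = 1"
  shows "cmod (Up rr (w*rr) \<psi> $ 1)^2 * cmod (Up rr (w*rr) \<psi> $ 2)^2 = kk w (\<psi>$1) (\<psi>$2) / 4"
  using H_prod[OF assms, of "\<psi>$1" "\<psi>$2"] by (simp add: Up_def kk_def)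

lemma inv_u:
  assumes w: "cmod w = 1"
  shows "(\<integral>\<psi>. kk w (\<psi>$1) (\<psi>$2) / 4 \<partial>haar_state) = (\<integral>\<psi>. cmod (\<psi>$1)^2 * cmod (\<psi>$2)^2 \<partial>haar_state)"
proof -
  have "(\<integral>\<psi>. kk w (\<psi>$1) (\<psi>$2) / 4 \<partial>haar_state)
      = (\<integral>\<psi>. cmod (Up rr (w*rr) \<psi> $ 1)^2 * cmod (Up rr (w*rr) \<psi> $ 2)^2 \<partial>haar_state)"
    by (simp add: HH_u[OF w])
  also have "\<dots> = (\<integral>\<psi>. cmod (\<psi>$1)^2 * cmod (\<psi>$2)^2 \<partial>haar_state)"
    by (rule integral_inv[OF Up_orth[OF Up_rr_norm[OF w]]])
       (rule borel_measurable_continuous_onI[OF u_cont])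
  finally show ?thesis .
qed

lemma inv_u2:
  assumes w: "cmod w = 1"
  shows "(\<integral>\<psi>. (kk w (\<psi>$1) (\<psi>$2) / 4)^2 \<partial>haar_state) = (\<integral>\<psi>. (cmod (\<psi>$1)^2 * cmod (\<psi>$2)^2)^2 \<partial>haar_state)"
proof -
  have "(\<integral>\<psi>. (kk w (\<psi>$1) (\<psi>$2) / 4)^2 \<partial>haar_state)
      = (\<integral>\<psi>. (cmod (Up rr (w*rr) \<psi> $ 1)^2 * cmod (Up rr (w*rr) \<psi> $ 2)^2)^2 \<partial>haar_state)"
    by (simp add: HH_u[OF w])
  also have "\<dots> = (\<integral>\<psi>. (cmod (\<psi>$1)^2 * cmod (\<psi>$2)^2)^2 \<partial>haar_state)"
    by (rule integral_inv[OF Up_orth[OF Up_rr_norm[OF w]]])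
       (rule borel_measurable_continuous_onI, intro continuous_intros)
  finally show ?thesis .
qed

lemma aux1: assumes "a + b = (1::real)" shows "(a^2+b^2)/2 = 1/2 - a*b"
proof -
  from assms have b: "b = 1 - a" by simp
  show ?thesis unfolding b by (simp add: power2_eq_square field_simps)
qed

lemma aux2: assumes "a + b = (1::real)"
  shows "(4*(a^2+b^2)^2 + 8*a^2*b^2)/16 = 1/4 - a*b + 3/2*(a*b)^2"
proof -
  from assms have b: "b = 1 - a" by simp
  show ?thesis unfolding b by (simp add: power2_eq_square field_simps)
qed

lemma Lu: "(\<integral>\<psi>. cmod (\<psi>$1)^2 * cmod (\<psi>$2)^2 \<partial>haar_state) = 1/6"
proof -
  define Lu where "Lu = (\<integral>\<psi>. cmod (\<psi>$1)^2 * cmod (\<psi>$2)^2 \<partial>haar_state)"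
  have i1: "integrable haar_state (\<lambda>\<psi>. kk w (\<psi>$1) (\<psi>$2) / 4)" for w
    by (intro integrable_cont continuous_intros kk_cont) simp_all
  have iu: "integrable haar_state (\<lambda>\<psi>. cmod (\<psi>$1)^2 * cmod (\<psi>$2)^2)"
    by (intro integrable_cont u_cont)
  have "Lu + Lu = (\<integral>\<psi>. kk 1 (\<psi>$1) (\<psi>$2) / 4 \<partial>haar_state) + (\<integral>\<psi>. kk \<i> (\<psi>$1) (\<psi>$2) / 4 \<partial>haar_state)"
    unfolding Lu_def using inv_u[of 1] inv_u[of \<i>] by simp
  also have "\<dots> = (\<integral>\<psi>. kk 1 (\<psi>$1) (\<psi>$2) / 4 + kk \<i> (\<psi>$1) (\<psi>$2) / 4 \<partial>haar_state)"
    using Bochner_Integration.integral_add[OF i1[of 1] i1[of \<i>]] by simp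
  also have "\<dots> = (\<integral>\<psi>. ((cmod (\<psi>$1)^2)^2 + (cmod (\<psi>$2)^2)^2) / 2 \<partial>haar_state)"
  proof (rule Bochner_Integration.integral_cong[OF refl])
    fix \<psi> :: "complex^2"
    show "kk 1 (\<psi>$1) (\<psi>$2) / 4 + kk \<i> (\<psi>$1) (\<psi>$2) / 4 = ((cmod (\<psi>$1)^2)^2 + (cmod (\<psi>$2)^2)^2) / 2"
      using K1[of "\<psi>$1" "\<psi>$2"] by simp
  qed
  also have "\<dots> = (\<integral>\<psi>. 1/2 - cmod (\<psi>$1)^2 * cmod (\<psi>$2)^2 \<partial>haar_state)"
  proof (rule integral_cong_AE)
    show "AE \<psi> in haar_state. ((cmod (\<psi>$1)^2)^2 + (cmod (\<psi>$2)^2)^2) / 2 = 1/2 - cmod (\<psi>$1)^2 * cmod (\<psi>$2)^2"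
      using AE_sum by eventually_elim (rule aux1)
  qed (auto intro!: borel_measurable_continuous_onI continuous_intros)
  also have "\<dots> = 1/2 - Lu"
    unfolding Lu_def by (subst Bochner_Integration.integral_diff) (simp_all add: iu)
  finally show ?thesis unfolding Lu_def by simp
qed


lemma Lu2: "(\<integral>\<psi>. (cmod (\<psi>$1)^2 * cmod (\<psi>$2)^2)^2 \<partial>haar_state) = 1/30"
proof -
  define L2 where "L2 = (\<integral>\<psi>. (cmod (\<psi>$1)^2 * cmod (\<psi>$2)^2)^2 \<partial>haar_state)"
  have i1: "integrable haar_state (\<lambda>\<psi>. (kk w (\<psi>$1) (\<psi>$2) / 4)^2)" for w
    by (intro integrable_cont continuous_intros kk_cont) simp_all
  have iu: "integrable haar_state (\<lambda>\<psi>. cmod (\<psi>$1)^2 * cmod (\<psi>$2)^2)"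
    by (intro integrable_cont u_cont)
  have iu2: "integrable haar_state (\<lambda>\<psi>. 3/2 * (cmod (\<psi>$1)^2 * cmod (\<psi>$2)^2)^2)"
    by (intro integrable_cont continuous_intros)
  have ce: "cmod (cnj ee) = 1" using ee_cmod by simp
  have "L2 + L2 + L2 + L2 = (\<integral>\<psi>. (kk 1 (\<psi>$1) (\<psi>$2) / 4)^2 \<partial>haar_state) + (\<integral>\<psi>. (kk \<i> (\<psi>$1) (\<psi>$2) / 4)^2 \<partial>haar_state)
     + (\<integral>\<psi>. (kk ee (\<psi>$1) (\<psi>$2) / 4)^2 \<partial>haar_state) + (\<integral>\<psi>. (kk (cnj ee) (\<psi>$1) (\<psi>$2) / 4)^2 \<partial>haar_state)"
    unfolding L2_def using inv_u2[of 1] inv_u2[of \<i>] inv_u2[OF ee_cmod] inv_u2[OF ce] by simp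
  also have "\<dots> = (\<integral>\<psi>. (kk 1 (\<psi>$1) (\<psi>$2) / 4)^2 + (kk \<i> (\<psi>$1) (\<psi>$2) / 4)^2
     + (kk ee (\<psi>$1) (\<psi>$2) / 4)^2 + (kk (cnj ee) (\<psi>$1) (\<psi>$2) / 4)^2 \<partial>haar_state)"
    using Bochner_Integration.integral_add[OF i1[of 1] i1[of \<i>]]
      Bochner_Integration.integral_add[OF Bochner_Integration.integrable_add[OF i1[of 1] i1[of \<i>]] i1[of ee]]
      Bochner_Integration.integral_add[OF Bochner_Integration.integrable_add[OF Bochner_Integration.integrable_add[OF i1[of 1] i1[of \<i>]] i1[of ee]] i1[of "cnj ee"]]
    by simp
  also have "\<dots> = (\<integral>\<psi>. (4*((cmod (\<psi>$1)^2)^2 + (cmod (\<psi>$2)^2)^2)^2 + 8*(cmod (\<psi>$1)^2)^2*(cmod (\<psi>$2)^2)^2)/16 \<partial>haar_state)"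
  proof (rule Bochner_Integration.integral_cong[OF refl])
    fix \<psi> :: "complex^2"
    show "(kk 1 (\<psi>$1) (\<psi>$2) / 4)^2 + (kk \<i> (\<psi>$1) (\<psi>$2) / 4)^2
     + (kk ee (\<psi>$1) (\<psi>$2) / 4)^2 + (kk (cnj ee) (\<psi>$1) (\<psi>$2) / 4)^2
     = (4*((cmod (\<psi>$1)^2)^2 + (cmod (\<psi>$2)^2)^2)^2 + 8*(cmod (\<psi>$1)^2)^2*(cmod (\<psi>$2)^2)^2)/16"
      using K2[of "\<psi>$1" "\<psi>$2"] by (simp add: power_divide add_divide_distrib[symmetric])
  qed
  also have "\<dots> = (\<integral>\<psi>. 1/4 - cmod (\<psi>$1)^2 * cmod (\<psi>$2)^2 + 3/2 * (cmod (\<psi>$1)^2 * cmod (\<psi>$2)^2)^2 \<partial>haar_state)"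
  proof (rule integral_cong_AE)
    show "AE \<psi> in haar_state. (4*((cmod (\<psi>$1)^2)^2 + (cmod (\<psi>$2)^2)^2)^2 + 8*(cmod (\<psi>$1)^2)^2*(cmod (\<psi>$2)^2)^2)/16
       = 1/4 - cmod (\<psi>$1)^2 * cmod (\<psi>$2)^2 + 3/2 * (cmod (\<psi>$1)^2 * cmod (\<psi>$2)^2)^2"
      using AE_sum by eventually_elim (rule aux2)
  qed (auto intro!: borel_measurable_continuous_onI continuous_intros)
  also have "\<dots> = 1/4 - 1/6 + 3/2 * L2"
  proof -
    have a: "integrable haar_state (\<lambda>\<psi>. 1/4 - cmod (\<psi>$1)^2 * cmod (\<psi>$2)^2)"
      by (intro integrable_cont continuous_intros)
    show ?thesis
      using Bochner_Integration.integral_add[OF a iu2] Bochner_Integration.integral_diff[OF int_const iu]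
      by (simp add: Lu L2_def)
  qed
  finally have "4 * L2 = 1/4 - 1/6 + 3/2 * L2" by simp
  then show ?thesis unfolding L2_def by simp
qed


lemma expval_c: "expval X \<psi> = cnj (\<psi>$1) * (X$1$1 * \<psi>$1 + X$1$2 * \<psi>$2) + cnj (\<psi>$2) * (X$2$1 * \<psi>$1 + X$2$2 * \<psi>$2)"
  by (simp add: expval_def sum_2 matrix_vector_mult_def)

lemma diag_X:
  assumes "unitary2 X"
  shows "\<exists>p1 p2 l1 l2. cmod p1^2 + cmod p2^2 = 1 \<and> cmod l1 = 1 \<and> cmod l2 = 1 \<and>
     (\<forall>\<psi>. expval X (Up p1 p2 \<psi>) = l1 * complex_of_real (cmod (\<psi>$1)^2) + l2 * complex_of_real (cmod (\<psi>$2)^2))"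
proof -
  have "adjoint2 X ** X = mat 1" using assms by (simp add: unitary2_def)
  then have e: "(adjoint2 X ** X)$i$j = (mat 1 :: complex^2^2)$i$j" for i j by simp
  have U1: "cnj (X$1$1) * X$1$1 + cnj (X$2$1) * X$2$1 = 1"
    using e[of 1 1] by (simp add: matrix_matrix_mult_def adjoint2_def sum_2 mat_def)
  have U2: "cnj (X$1$1) * X$1$2 + cnj (X$2$1) * X$2$2 = 0"
    using e[of 1 2] by (simp add: matrix_matrix_mult_def adjoint2_def sum_2 mat_def)
  have U3: "cnj (X$1$2) * X$1$1 + cnj (X$2$2) * X$2$1 = 0"
    using e[of 2 1] by (simp add: matrix_matrix_mult_def adjoint2_def sum_2 mat_def)
  have U4: "cnj (X$1$2) * X$1$2 + cnj (X$2$2) * X$2$2 = 1"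
    using e[of 2 2] by (simp add: matrix_matrix_mult_def adjoint2_def sum_2 mat_def)
  obtain p1 p2 l1 l2 where P: "cmod p1^2 + cmod p2^2 = 1" "cmod l1 = 1" "cmod l2 = 1"
    and M: "\<And>x1 x2. cnj (x1*p1 - x2*cnj p2) * (X$1$1*(x1*p1 - x2*cnj p2) + X$1$2*(x1*p2 + x2*cnj p1))
       + cnj (x1*p2 + x2*cnj p1) * (X$2$1*(x1*p1 - x2*cnj p2) + X$2$2*(x1*p2 + x2*cnj p1))
       = l1 * (cnj x1 * x1) + l2 * (cnj x2 * x2)"
    using diag_core[OF U1 U2 U3 U4] by blast
  have cn: "cnj x * x = complex_of_real (cmod x ^ 2)" for x
    by (subst complex_norm_square) (simp add: mult.commute)
  show ?thesis
    using P M by (intro exI[of _ p1] exI[of _ p2] exI[of _ l1] exI[of _ l2]) (simp add: expval_c Up_def cn)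
qed

lemma mod_id:
  assumes "cmod l1 = 1" "cmod l2 = 1"
  shows "cmod (l1 * complex_of_real s + l2 * complex_of_real t)^2 = s^2 + t^2 + 2 * Re (l1 * cnj l2) * s * t"
proof -
  have h1: "Re l1 ^2 + Im l1 ^2 = 1" using assms(1) cmod_power2[of l1] by simp
  have h2: "Re l2 ^2 + Im l2 ^2 = 1" using assms(2) cmod_power2[of l2] by simp
  have "cmod (l1 * complex_of_real s + l2 * complex_of_real t)^2
      = (Re l1 ^2 + Im l1 ^2) * s^2 + (Re l2 ^2 + Im l2 ^2) * t^2 + 2 * (Re l1 * Re l2 + Im l1 * Im l2) * s * t"
    by (simp only: cmod_power2) (simp add: power2_eq_square algebra_simps)
  then show ?thesis using h1 h2 by simp
qed

lemma aux3: assumes "a + b = (1::real)" shows "a^2 + b^2 + 2*c*a*b = 1 - 2*(1-c)*(a*b)"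
proof -
  from assms have b: "b = 1 - a" by simp
  show ?thesis unfolding b by (simp add: power2_eq_square algebra_simps)
qed

lemma aux4: assumes "a + b = (1::real)"
  shows "(a^2 + b^2 + 2*c*a*b)^2 = 1 - 4*(1-c)*(a*b) + 4*(1-c)^2*(a*b)^2"
  unfolding aux3[OF assms] by (simp add: power2_eq_square algebra_simps)

theorem proposition9:
  fixes X :: "complex^2^2"
  assumes "unitary2 X"
  shows "let F = (\<integral>\<psi>. (cmod (expval X \<psi>))^2 \<partial>haar_state);
             D = sqrt ((\<integral>\<psi>. (cmod (expval X \<psi>))^4 \<partial>haar_state) - F^2)
         in D = (1 - F) / sqrt 5"
proof -
  obtain p1 p2 l1 l2 where P: "cmod p1^2 + cmod p2^2 = 1" "cmod l1 = 1" "cmod l2 = 1"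
    and E: "\<And>\<psi>. expval X (Up p1 p2 \<psi>) = l1 * complex_of_real (cmod (\<psi>$1)^2) + l2 * complex_of_real (cmod (\<psi>$2)^2)"
    using diag_X[OF assms] by blast
  define c where "c = Re (l1 * cnj l2)"
  have c1: "c \<le> 1"
  proof -
    have "c \<le> cmod (l1 * cnj l2)" unfolding c_def by (rule complex_Re_le_cmod)
    also have "\<dots> = 1" using P by (simp add: norm_mult)
    finally show ?thesis .
  qed
  have orth: "orthogonal_transformation (Up p1 p2)" by (rule Up_orth[OF P(1)])
  have ecnt: "continuous_on UNIV (\<lambda>\<psi>. expval X \<psi>)"
    unfolding expval_c by (intro continuous_intros)
  have iu: "integrable haar_state (\<lambda>\<psi>. cmod (\<psi>$1)^2 * cmod (\<psi>$2)^2)"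
    by (intro integrable_cont u_cont)
  have iu2: "integrable haar_state (\<lambda>\<psi>. (cmod (\<psi>$1)^2 * cmod (\<psi>$2)^2)^2)"
    by (intro integrable_cont continuous_intros)
  have pw: "cmod (expval X (Up p1 p2 \<psi>))^2 = (cmod (\<psi>$1)^2)^2 + (cmod (\<psi>$2)^2)^2 + 2 * c * cmod (\<psi>$1)^2 * cmod (\<psi>$2)^2" for \<psi>
    unfolding E c_def by (rule mod_id[OF P(2) P(3)])
  have F: "(\<integral>\<psi>. (cmod (expval X \<psi>))^2 \<partial>haar_state) = 1 - 2*(1-c)*(1/6)"
  proof -
    have "(\<integral>\<psi>. (cmod (expval X \<psi>))^2 \<partial>haar_state) = (\<integral>\<psi>. (cmod (expval X (Up p1 p2 \<psi>)))^2 \<partial>haar_state)"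
      by (rule integral_inv[OF orth, symmetric])
         (rule borel_measurable_continuous_onI, intro continuous_intros ecnt)
    also have "\<dots> = (\<integral>\<psi>. (cmod (\<psi>$1)^2)^2 + (cmod (\<psi>$2)^2)^2 + 2 * c * cmod (\<psi>$1)^2 * cmod (\<psi>$2)^2 \<partial>haar_state)"
      by (simp only: pw)
    also have "\<dots> = (\<integral>\<psi>. 1 - 2*(1-c)*(cmod (\<psi>$1)^2 * cmod (\<psi>$2)^2) \<partial>haar_state)"
    proof (rule integral_cong_AE)
      show "AE \<psi> in haar_state. (cmod (\<psi>$1)^2)^2 + (cmod (\<psi>$2)^2)^2 + 2 * c * cmod (\<psi>$1)^2 * cmod (\<psi>$2)^2
          = 1 - 2*(1-c)*(cmod (\<psi>$1)^2 * cmod (\<psi>$2)^2)"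
        using AE_sum by eventually_elim (rule aux3)
    qed (auto intro!: borel_measurable_continuous_onI continuous_intros)
    also have "\<dots> = 1 - 2*(1-c)*(1/6)"
      using Bochner_Integration.integral_diff[OF int_const integrable_mult_right[OF iu, of "2*(1-c)"]]
      by (simp add: Lu)
    finally show ?thesis .
  qed
  have M: "(\<integral>\<psi>. (cmod (expval X \<psi>))^4 \<partial>haar_state) = 1 - 4*(1-c)*(1/6) + 4*(1-c)^2*(1/30)"
  proof -
    have "(\<integral>\<psi>. (cmod (expval X \<psi>))^4 \<partial>haar_state) = (\<integral>\<psi>. (cmod (expval X (Up p1 p2 \<psi>)))^4 \<partial>haar_state)"
      by (rule integral_inv[OF orth, symmetric])
         (rule borel_measurable_continuous_onI, intro continuous_intros ecnt)
    also have "\<dots> = (\<integral>\<psi>. ((cmod (\<psi>$1)^2)^2 + (cmod (\<psi>$2)^2)^2 + 2 * c * cmod (\<psi>$1)^2 * cmod (\<psi>$2)^2)^2 \<partial>haar_state)"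
    proof (rule Bochner_Integration.integral_cong[OF refl])
      fix \<psi> :: "complex^2"
      have "(cmod (expval X (Up p1 p2 \<psi>)))^4 = ((cmod (expval X (Up p1 p2 \<psi>)))^2)^2" by simp
      then show "(cmod (expval X (Up p1 p2 \<psi>)))^4 = ((cmod (\<psi>$1)^2)^2 + (cmod (\<psi>$2)^2)^2 + 2 * c * cmod (\<psi>$1)^2 * cmod (\<psi>$2)^2)^2"
        by (simp only: pw)
    qed
    also have "\<dots> = (\<integral>\<psi>. 1 - 4*(1-c)*(cmod (\<psi>$1)^2 * cmod (\<psi>$2)^2) + 4*(1-c)^2*(cmod (\<psi>$1)^2 * cmod (\<psi>$2)^2)^2 \<partial>haar_state)"
    proof (rule integral_cong_AE)
      show "AE \<psi> in haar_state. ((cmod (\<psi>$1)^2)^2 + (cmod (\<psi>$2)^2)^2 + 2 * c * cmod (\<psi>$1)^2 * cmod (\<psi>$2)^2)^2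
          = 1 - 4*(1-c)*(cmod (\<psi>$1)^2 * cmod (\<psi>$2)^2) + 4*(1-c)^2*(cmod (\<psi>$1)^2 * cmod (\<psi>$2)^2)^2"
        using AE_sum by eventually_elim (rule aux4)
    qed (auto intro!: borel_measurable_continuous_onI continuous_intros)
    also have "\<dots> = 1 - 4*(1-c)*(1/6) + 4*(1-c)^2*(1/30)"
    proof -
      have a: "integrable haar_state (\<lambda>\<psi>. 1 - 4*(1-c)*(cmod (\<psi>$1)^2 * cmod (\<psi>$2)^2))"
        by (intro integrable_cont continuous_intros)
      show ?thesis
        using Bochner_Integration.integral_add[OF a integrable_mult_right[OF iu2, of "4*(1-c)^2"]]
          Bochner_Integration.integral_diff[OF int_const integrable_mult_right[OF iu, of "4*(1-c)"]]
        by (simp add: Lu Lu2)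
    qed
    finally show ?thesis .
  qed
  define x where "x = 1 - c"
  have x0: "0 \<le> x" using c1 by (simp add: x_def)
  have sq: "(x / (3 * sqrt 5))^2 = x^2 / 45"
    by (simp add: power_divide power_mult_distrib)
  have "1 - 4*(1-c)*(1/6) + 4*(1-c)^2*(1/30) - (1 - 2*(1-c)*(1/6))^2 = x^2/45"
    unfolding x_def by (simp add: power2_eq_square algebra_simps)
  then have "sqrt (1 - 4*(1-c)*(1/6) + 4*(1-c)^2*(1/30) - (1 - 2*(1-c)*(1/6))^2) = x / (3 * sqrt 5)"
    using x0 by (simp only: sq[symmetric] real_sqrt_abs) simp
  also have "\<dots> = (1 - (1 - 2*(1-c)*(1/6))) / sqrt 5" by (simp add: x_def field_simps)
  finally show ?thesis unfolding Let_def F M .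
qed

end
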